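(* Let $\mathbb{K}$ be a field of characteristic zero, let $u,v\in\mathbb{K}$ with $uv\neq0$, and let $f_j=X^{\alpha_j}(uX+v)^{\beta_j}$ for $1\le j\le \ell$, where $\alpha_j,\beta_j$ are integers with $\alpha_j\ge \ell$ and $\beta_j\ge\ell$ for all $j$. If $f_1,\dots,f_\ell$ are linearly independent over $\mathbb{K}$, then \[\operatorname{val}\bigl(W(f_1,\dots,f_\ell)\bigr)\le\sum_{j=1}^\ell\alpha_j.\]
   Context: The Wronskian $W(f_1,\dots,f_\ell)$ is the determinant of the $\ell\times\ell$ matrix whose entry in row $i$ ($0\le i\le\ell-1$) and column $j$ is $f_j^{(i)}$. For a nonzero polynomial $P$, $\operatorname{val}(P)$ is the largest integer $v$ with $X^v\mid P$. *)

theory Defs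
  imports "HOL-Computational_Algebra.Polynomial" "Jordan_Normal_Form.Determinant"
begin

definition wronskian :: "nat \<Rightarrow> (nat \<Rightarrow> 'a::idom poly) \<Rightarrow> 'a poly" where
  "wronskian l f = det (mat l l (\<lambda>(i, j). (pderiv ^^ i) (f j)))"

(* val P = largest v with X^v dividing P (meaningful for P \<noteq> 0) *)
definition val :: "'a::comm_semiring_1 poly \<Rightarrow> nat" where
  "val P = (GREATEST v. (monom 1 1) ^ v dvd P)"

definition lin_indep_polys :: "nat \<Rightarrow> (nat \<Rightarrow> 'a::field poly) \<Rightarrow> bool" where
  "lin_indep_polys l f \<longleftrightarrow>
     (\<forall>c::nat \<Rightarrow> 'a. (\<Sum>j<l. smult (c j) (f j)) = 0 \<longrightarrow> (\<forall>j<l. c j = 0))"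

end

theory Submission
  imports Defs
begin

lemma funpow_pderiv_add_smult:
  "(pderiv ^^ i) (p + smult c q) = (pderiv ^^ i) p + smult c ((pderiv ^^ i) q)"
  by (induction i) (simp_all add: pderiv_add pderiv_smult)

lemma coeff_funpow_pderiv:
  "coeff ((pderiv ^^ i) p) n = coeff p (n + i) * of_nat (\<Prod>k<i. n + i - k)"
proof (induction i arbitrary: p)
  case 0 then show ?case by simp
next
  case (Suc i)
  have "(pderiv ^^ Suc i) p = (pderiv ^^ i) (pderiv p)" by (simp add: funpow_Suc_right del: funpow.simps)
  then have "coeff ((pderiv ^^ Suc i) p) n = coeff (pderiv p) (n + i) * of_nat (\<Prod>k<i. n + i - k)"
    using Suc by simp
  also have "\<dots> = coeff p (n + Suc i) * (of_nat (Suc (n+i)) * of_nat (\<Prod>k<i. n + i - k))"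
    by (simp add: coeff_pderiv algebra_simps)
  also have "(\<Prod>k<Suc i. n + Suc i - k) = Suc (n+i) * (\<Prod>k<i. n + i - k)"
    by (simp add: prod.lessThan_Suc_shift del: prod.lessThan_Suc)
  ultimately show ?case by (simp add: algebra_simps)
qed

lemma degree_funpow_pderiv: "degree ((pderiv ^^ i) (p::'a::{idom,semiring_char_0} poly)) \<le> degree p - i"
proof (induction i)
  case (Suc i) then show ?case by (simp add: degree_pderiv)
qed simp

lemma funpow_pderiv_zero: "degree p < i \<Longrightarrow> (pderiv ^^ i) (p::'a::{idom,semiring_char_0} poly) = 0"
proof (induction i arbitrary: p)
  case 0 then show ?case by simp
next
  case (Suc i)
  show ?case
  proof (cases "degree p = 0")
    case True
    then obtain c where "p = [:c:]" using degree_eq_zeroE by blast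
    then have "pderiv p = 0" by simp
    moreover have "(pderiv ^^ i) 0 = (0::'a poly)" by (induction i) auto
    ultimately show ?thesis by (simp add: funpow_Suc_right del: funpow.simps)
  next
    case False
    then have "degree (pderiv p) < i" using Suc.prems by (simp add: degree_pderiv)
    then show ?thesis using Suc.IH by (simp add: funpow_Suc_right del: funpow.simps)
  qed
qed

lemma coeff_mult_le:
  assumes "degree p \<le> m" "degree q \<le> n"
  shows "coeff (p * q) (m + n) = coeff p m * coeff q n"
proof (cases "degree p = m \<and> degree q = n")
  case True then show ?thesis using coeff_mult_degree_sum[of p q] by simp
next
  case False
  then have "degree p + degree q < m + n" using assms by auto
  then have "degree (p*q) < m + n" using degree_mult_le[of p q] by linarith
  then have "coeff (p*q) (m+n) = 0" by (rule coeff_eq_0)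
  moreover have "coeff p m * coeff q n = 0" using False assms by (auto simp: coeff_eq_0)
  ultimately show ?thesis by simp
qed

lemma coeff_prod_le:
  assumes "finite I" "\<And>i. i \<in> I \<Longrightarrow> degree (p i) \<le> e i"
  shows "coeff (\<Prod>i\<in>I. p i) (\<Sum>i\<in>I. e i) = (\<Prod>i\<in>I. coeff (p i) (e i))"
  using assms
proof (induction I rule: finite_induct)
  case empty then show ?case by simp
next
  case (insert x F)
  have "degree (\<Prod>i\<in>F. p i) \<le> sum (degree \<circ> p) F"
    by (rule degree_prod_sum_le[OF insert(1)])
  also have "\<dots> \<le> (\<Sum>i\<in>F. e i)"
    by (rule sum_mono) (simp add: insert(4))
  finally have "degree (\<Prod>i\<in>F. p i) \<le> (\<Sum>i\<in>F. e i)" .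
  then show ?case using insert by (simp add: coeff_mult_le)
qed

lemma coeff_of_int_mult: "coeff (of_int k * q) n = of_int k * coeff q n"
  by (simp add: of_int_poly)


lemma wronskian_addcol:
  assumes "k \<noteq> m" "k < l" "m < l"
  shows "wronskian l (f(m := f m + smult c (f k))) = wronskian l f"
proof -
  let ?A = "mat l l (\<lambda>(i, j). (pderiv ^^ i) (f j))"
  have A: "?A \<in> carrier_mat l l" by simp
  have "mat l l (\<lambda>(i, j). (pderiv ^^ i) ((f(m := f m + smult c (f k))) j)) = addcol [:c:] m k ?A"
    using assms by (intro eq_matI) (auto simp: mat_addcol_def funpow_pderiv_add_smult)
  then show ?thesis unfolding wronskian_def using det_addcol[OF assms(2) _ A, of m "[:c:]"] assms by simp
qed

lemma lin_indep_nonzero: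
  assumes "lin_indep_polys l f" "j < l" shows "f j \<noteq> 0"
proof
  assume h: "f j = 0"
  have "(\<Sum>i<l. smult (if i = j then 1 else 0) (f i)) = (\<Sum>i<l. if i = j then f i else 0)"
    by (rule sum.cong) auto
  also have "\<dots> = 0" using h assms(2) by simp
  finally have S: "(\<Sum>i<l. smult (if i = j then 1 else 0) (f i)) = 0" .
  from assms(1) have H: "(\<Sum>i<l. smult ((\<lambda>i. if i = j then (1::'a) else 0) i) (f i)) = 0 \<longrightarrow>
      (\<forall>i<l. (\<lambda>i. if i = j then (1::'a) else 0) i = 0)"
    unfolding lin_indep_polys_def by (rule spec)
  have "(\<lambda>i. if i = j then (1::'a) else 0) j = 0" using mp[OF H] S assms(2) by blast
  then show False by simp
qed

lemma sum_if_eq: "m < (l::nat) \<Longrightarrow> (\<Sum>j<l. if j = m then x else 0) = (x::'a::comm_monoid_add)"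
  by (rule trans[OF sum.delta]) auto

lemma sum_upd:
  assumes "m < (l::nat)"
  shows "(\<Sum>j<l. smult (c j) ((f(m := f m + q)) j)) = (\<Sum>j<l. smult (c j) (f j)) + smult (c m) q"
proof -
  have "(\<Sum>j<l. smult (c j) ((f(m := f m + q)) j)) = (\<Sum>j<l. smult (c j) (f j) + (if j = m then smult (c m) q else 0))"
    by (intro sum.cong) (auto simp: smult_add_right)
  also have "\<dots> = (\<Sum>j<l. smult (c j) (f j)) + smult (c m) q"
    using sum_if_eq[OF assms, of "smult (c m) q"] by (unfold sum.distrib) argo
  finally show ?thesis .
qed

lemma lin_indep_addcol:
  assumes "lin_indep_polys l f" "k \<noteq> m" "k < l" "m < l"
  shows "lin_indep_polys l (f(m := f m + smult a (f k)))"
  unfolding lin_indep_polys_def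
proof (rule allI, rule impI)
  fix c :: "nat \<Rightarrow> 'a"
  assume h: "(\<Sum>j<l. smult (c j) ((f(m := f m + smult a (f k))) j)) = 0"
  define c' where "c' = (\<lambda>j. c j + (if j = k then c m * a else 0))"
  have "(\<Sum>j<l. smult (c' j) (f j)) = (\<Sum>j<l. smult (c j) (f j) + (if j = k then smult (c m * a) (f k) else 0))"
    unfolding c'_def by (intro sum.cong) (auto simp: smult_add_left)
  also have "\<dots> = (\<Sum>j<l. smult (c j) (f j)) + smult (c m * a) (f k)"
    using sum_if_eq[OF assms(3), of "smult (c m * a) (f k)"] by (unfold sum.distrib) argo
  also have "\<dots> = 0" using h sum_upd[OF assms(4), of c f "smult a (f k)"] by simp
  finally have "\<forall>j<l. c' j = 0" using assms(1) unfolding lin_indep_polys_def by blast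
  then have "c' m = 0" "c' k = 0" using assms by auto
  then have cm: "c m = 0" using assms(2) unfolding c'_def by auto
  show "\<forall>j<l. c j = 0"
  proof (intro allI impI)
    fix j assume "j < l"
    then have "c' j = 0" using \<open>\<forall>j<l. c' j = 0\<close> by blast
    then show "c j = 0" using cm unfolding c'_def by (auto split: if_splits)
  qed
qed

definition dd :: "nat \<Rightarrow> (nat \<Rightarrow> 'a::zero poly) \<Rightarrow> bool" where
  "dd m f \<longleftrightarrow> (\<forall>a<m. \<forall>b<m. a \<noteq> b \<longrightarrow> degree (f a) \<noteq> degree (f b))"

lemma reduce_step:
  fixes f :: "nat \<Rightarrow> 'a::field_char_0 poly"
  assumes "lin_indep_polys l f" "m < l" "dd m f"
  shows "\<exists>h. lin_indep_polys l h \<and> wronskian l h = wronskian l f \<and> dd (Suc m) h"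
  using assms
proof (induction "degree (f m)" arbitrary: f rule: less_induct)
  case less
  show ?case
  proof (cases "\<forall>k<m. degree (f k) \<noteq> degree (f m)")
    case True
    have "dd (Suc m) f" unfolding dd_def
    proof (intro allI impI)
      fix a b assume ab: "a < Suc m" "b < Suc m" "a \<noteq> b"
      show "degree (f a) \<noteq> degree (f b)"
      proof (cases "a = m")
        case am: True
        then have "b < m" using ab by simp
        then have "degree (f b) \<noteq> degree (f m)" using True by simp
        then show ?thesis using am by simp
      next
        case am: False
        show ?thesis
        proof (cases "b = m")
          case bm: True
          then have "a < m" using ab am by simp
          then show ?thesis using True bm by simp
        next
          case bm: False
          then have "a < m" "b < m" using ab am by auto
          then show ?thesis using less.prems(3) ab(3) unfolding dd_def by blast
        qed
      qed
    qed
    then show ?thesis using less.prems by blast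
  next
    case False
    then obtain k where k: "k < m" "degree (f k) = degree (f m)" by blast
    have fk: "f k \<noteq> 0" using lin_indep_nonzero[OF less.prems(1)] less.prems(2) k by auto
    have fm: "f m \<noteq> 0" using lin_indep_nonzero[OF less.prems(1)] less.prems(2) k by auto
    define c where "c = - lead_coeff (f m) / lead_coeff (f k)"
    define g where "g = f(m := f m + smult c (f k))"
    have gi: "lin_indep_polys l g" unfolding g_def
      using lin_indep_addcol[OF less.prems(1)] k less.prems by auto
    have gw: "wronskian l g = wronskian l f" unfolding g_def
      using wronskian_addcol[of k m l f c] k less.prems(2) by simp
    have gd: "dd m g" using less.prems(3) unfolding dd_def g_def by auto
    have gm0: "g m \<noteq> 0" using lin_indep_nonzero[OF gi less.prems(2)] .
    have dle: "degree (g m) \<le> degree (f m)" unfolding g_def using k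
      by (simp add: degree_add_le)
    have lk: "lead_coeff (f k) \<noteq> 0" using fk by simp
    have "coeff (g m) (degree (f m)) = lead_coeff (f m) + c * lead_coeff (f k)"
      unfolding g_def using k by simp
    also have "\<dots> = 0" unfolding c_def using lk by (simp add: field_simps)
    finally have "coeff (g m) (degree (f m)) = 0" .
    then have "degree (g m) \<noteq> degree (f m)"
    proof (intro notI)
      assume "coeff (g m) (degree (f m)) = 0" "degree (g m) = degree (f m)"
      then have "lead_coeff (g m) = 0" by simp
      then show False using gm0 by simp
    qed
    with dle have "degree (g m) < degree (f m)" by simp
    from less.hyps[OF this gi less.prems(2) gd] show ?thesis unfolding gw .
  qed
qed

lemma reduce_all:
  fixes f :: "nat \<Rightarrow> 'a::field_char_0 poly"
  assumes "lin_indep_polys l f" "m \<le> l" "dd m f"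
  shows "\<exists>h. lin_indep_polys l h \<and> wronskian l h = wronskian l f \<and> dd l h"
  using assms
proof (induction "l - m" arbitrary: f m)
  case 0 then show ?case by auto
next
  case (Suc x)
  then have "m < l" by simp
  from reduce_step[OF Suc.prems(1) this Suc.prems(3)] obtain h where
    h: "lin_indep_polys l h" "wronskian l h = wronskian l f" "dd (Suc m) h" by blast
  have "x = l - Suc m" "Suc m \<le> l" using Suc.hyps(2) \<open>m < l\<close> by auto
  from Suc.hyps(1)[OF this(1) h(1) this(2) h(3)] show ?case unfolding h(2) .
qed


definition Qp :: "nat \<Rightarrow> 'a::comm_ring_1 poly" where
  "Qp i = (\<Prod>k<i. [:- of_nat k, 1:])"

lemma poly_Qp: "poly (Qp i) (of_nat d :: 'a::comm_ring_1) = of_nat (\<Prod>k<i. d - k)"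
proof (cases "i \<le> d")
  case True
  then show ?thesis unfolding Qp_def poly_prod of_nat_prod
    by (intro prod.cong) (auto simp: of_nat_diff)
next
  case False
  then have "d \<in> {..<i}" by simp
  then have "(\<Prod>k<i. d - k) = 0" by (intro prod_zero) auto
  moreover have "poly (Qp i) (of_nat d :: 'a) = 0" unfolding Qp_def poly_prod
    using \<open>d \<in> {..<i}\<close> by (intro prod_zero) auto
  ultimately show ?thesis by (simp only: of_nat_0)
qed

lemma degree_Qp: "degree (Qp i :: 'a::comm_ring_1 poly) \<le> i"
proof -
  have "degree (Qp i :: 'a poly) \<le> (\<Sum>k<i. degree ([:- of_nat k, 1:] :: 'a poly))"
    unfolding Qp_def using degree_prod_sum_le[of "{..<i}" "\<lambda>k. [:- of_nat k, 1:] :: 'a poly"] by (simp only: comp_def finite_lessThan)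
  also have "\<dots> \<le> (\<Sum>k<i. 1)" by (intro sum_mono) simp
  finally show ?thesis by simp
qed

lemma coeff_Qp: "coeff (Qp i :: 'a::comm_ring_1 poly) i = 1"
proof -
  have "coeff (Qp i :: 'a poly) (\<Sum>k<i. 1) = (\<Prod>k<i. coeff [:- of_nat k, 1:] 1)"
    unfolding Qp_def by (rule coeff_prod_le) auto
  then show ?thesis by simp
qed

lemma falling_det_nonzero:
  fixes d :: "nat \<Rightarrow> nat"
  assumes "inj_on d {0..<l}"
  shows "det (mat l l (\<lambda>(i, j). of_nat (\<Prod>k<i. d j - k) :: 'a::field_char_0)) \<noteq> 0"
proof
  let ?F = "mat l l (\<lambda>(i, j). of_nat (\<Prod>k<i. d j - k) :: 'a)"
  let ?G = "transpose_mat ?F"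
  assume "det ?F = 0"
  then have "det ?G = 0" using det_transpose[of ?F l] by simp
  then obtain v where v: "v \<in> carrier_vec l" "v \<noteq> 0\<^sub>v l" "?G *\<^sub>v v = 0\<^sub>v l"
    using det_0_iff_vec_prod_zero_field[of ?G l] by auto
  define P :: "'a poly" where "P = (\<Sum>i<l. smult (v $ i) (Qp i))"
  have root: "poly P (of_nat (d j)) = 0" if j: "j < l" for j
  proof -
    have "(?G *\<^sub>v v) $ j = 0" using v(3) j by simp
    then have "(\<Sum>i\<in>{0..<l}. of_nat (\<Prod>k<i. d j - k) * v $ i) = 0"
      using j v(1) by (simp add: scalar_prod_def)
    moreover have "poly P (of_nat (d j)) = (\<Sum>i\<in>{0..<l}. of_nat (\<Prod>k<i. d j - k) * v $ i)"
      unfolding P_def poly_sum by (intro sum.cong) (auto simp: poly_Qp)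
    ultimately show ?thesis by simp
  qed
  have lpos: "l > 0" using v by (cases l) auto
  have degP: "degree P < l"
  proof -
    have "degree P \<le> l - 1" unfolding P_def
      by (intro degree_sum_le) (auto intro: order.trans[OF degree_smult_le] order.trans[OF degree_Qp])
    then show ?thesis using lpos by simp
  qed
  have cardA: "card ((\<lambda>j. of_nat (d j) :: 'a) ` {0..<l}) = l"
  proof -
    have "inj_on (\<lambda>j. of_nat (d j) :: 'a) {0..<l}" using assms
      by (auto simp: inj_on_def)
    then show ?thesis by (simp add: card_image)
  qed
  have "P = 0"
    by (rule poly_eqI_degree[of "(\<lambda>j. of_nat (d j)) ` {0..<l}"]) (auto simp: root cardA degP lpos)
  define S where "S = {i. i < l \<and> v $ i \<noteq> 0}"
  have "S \<noteq> {}"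
  proof
    assume "S = {}"
    then have "v = 0\<^sub>v l" using v(1) unfolding S_def by (intro eq_vecI) auto
    then show False using v(2) by simp
  qed
  have finS: "finite S" unfolding S_def by simp
  define i0 where "i0 = Max S"
  have i0S: "i0 \<in> S" unfolding i0_def using finS \<open>S \<noteq> {}\<close> by simp
  have big: "v $ i = 0" if "i0 < i" "i < l" for i
  proof (rule ccontr)
    assume "v $ i \<noteq> 0"
    then have "i \<in> S" using that unfolding S_def by simp
    then have "i \<le> i0" unfolding i0_def using Max_ge[OF finS] by simp
    then show False using that by simp
  qed
  have "coeff P i0 = (\<Sum>i<l. v $ i * coeff (Qp i :: 'a poly) i0)"
    unfolding P_def by (simp add: coeff_sum)
  also have "\<dots> = (\<Sum>i<l. if i = i0 then v $ i0 else 0)"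
  proof (intro sum.cong refl)
    fix i assume i: "i \<in> {..<l}"
    show "v $ i * coeff (Qp i :: 'a poly) i0 = (if i = i0 then v $ i0 else 0)"
    proof (cases "i = i0")
      case True then show ?thesis by (simp add: coeff_Qp)
    next
      case False
      show ?thesis
      proof (cases "i < i0")
        case True
        have "coeff (Qp i :: 'a poly) i0 = 0"
          by (rule coeff_eq_0, rule le_less_trans[OF degree_Qp True])
        then show ?thesis using False by simp
      next
        case False2: False
        then show ?thesis using False big[of i] i by simp
      qed
    qed
  qed
  also have "\<dots> = v $ i0" using i0S unfolding S_def by (intro sum_if_eq) simp
  finally have "coeff P i0 = v $ i0" .
  then show False using \<open>P = 0\<close> i0S unfolding S_def by simp
qed


lemma perm_term_coeff:
  fixes h :: "nat \<Rightarrow> 'a::field_char_0 poly"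
  assumes p: "p permutes {0..<l}"
  defines "d \<equiv> \<lambda>j. degree (h j)"
  shows "coeff (\<Prod>i\<in>{0..<l}. (pderiv ^^ i) (h (p i))) ((\<Sum>j\<in>{0..<l}. d j) - (\<Sum>i\<in>{0..<l}. i))
     = (\<Prod>j\<in>{0..<l}. lead_coeff (h j)) * (\<Prod>i\<in>{0..<l}. of_nat (\<Prod>k<i. d (p i) - k))"
proof (cases "\<forall>i\<in>{0..<l}. i \<le> d (p i)")
  case True
  define e where "e = (\<lambda>i. d (p i) - i)"
  have bij: "bij_betw p {0..<l} {0..<l}" using permutes_imp_bij[OF p] .
  have "(\<Sum>i\<in>{0..<l}. e i) = (\<Sum>i\<in>{0..<l}. d (p i)) - (\<Sum>i\<in>{0..<l}. i)"
    unfolding e_def using True by (intro sum_subtractf_nat) auto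
  also have "(\<Sum>i\<in>{0..<l}. d (p i)) = (\<Sum>j\<in>{0..<l}. d j)"
    using sum.reindex_bij_betw[OF bij, of d] .
  finally have eN: "(\<Sum>i\<in>{0..<l}. e i) = (\<Sum>j\<in>{0..<l}. d j) - (\<Sum>i\<in>{0..<l}. i)" .
  have "coeff (\<Prod>i\<in>{0..<l}. (pderiv ^^ i) (h (p i))) (\<Sum>i\<in>{0..<l}. e i)
      = (\<Prod>i\<in>{0..<l}. coeff ((pderiv ^^ i) (h (p i))) (e i))"
    by (rule coeff_prod_le) (auto simp: e_def d_def degree_funpow_pderiv)
  also have "\<dots> = (\<Prod>i\<in>{0..<l}. lead_coeff (h (p i)) * of_nat (\<Prod>k<i. d (p i) - k))"
  proof (intro prod.cong refl)
    fix i assume "i \<in> {0..<l}"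
    then have "e i + i = d (p i)" using True unfolding e_def by auto
    then show "coeff ((pderiv ^^ i) (h (p i))) (e i) = lead_coeff (h (p i)) * of_nat (\<Prod>k<i. d (p i) - k)"
      by (simp add: coeff_funpow_pderiv d_def)
  qed
  also have "\<dots> = (\<Prod>i\<in>{0..<l}. lead_coeff (h (p i))) * (\<Prod>i\<in>{0..<l}. of_nat (\<Prod>k<i. d (p i) - k))"
    by (rule prod.distrib)
  also have "(\<Prod>i\<in>{0..<l}. lead_coeff (h (p i))) = (\<Prod>j\<in>{0..<l}. lead_coeff (h j))"
    using prod.reindex_bij_betw[OF bij, of "\<lambda>j. lead_coeff (h j)"] .
  finally show ?thesis unfolding eN .
next
  case False
  then obtain i where i: "i \<in> {0..<l}" "d (p i) < i" by (auto simp: not_le)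
  have "(pderiv ^^ i) (h (p i)) = 0" using i funpow_pderiv_zero unfolding d_def by blast
  then have "(\<Prod>i\<in>{0..<l}. (pderiv ^^ i) (h (p i))) = 0" using i by (intro prod_zero) auto
  moreover have "(\<Prod>k<i. d (p i) - k) = 0" using i by (intro prod_zero) auto
  then have "(\<Prod>i\<in>{0..<l}. of_nat (\<Prod>k<i. d (p i) - k) :: 'a) = 0" using i by (intro prod_zero) auto
  ultimately show ?thesis by (simp only: coeff_0 mult_zero_right)
qed

lemma wronskian_dd_nonzero:
  fixes h :: "nat \<Rightarrow> 'a::field_char_0 poly"
  assumes "dd l h" "\<And>j. j < l \<Longrightarrow> h j \<noteq> 0"
  shows "wronskian l h \<noteq> 0"
proof
  assume W0: "wronskian l h = 0"
  define d where "d = (\<lambda>j. degree (h j))"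
  define N where "N = (\<Sum>j\<in>{0..<l}. d j) - (\<Sum>i\<in>{0..<l}. i)"
  define L where "L = (\<Prod>j\<in>{0..<l}. lead_coeff (h j))"
  let ?M = "mat l l (\<lambda>(i, j). (pderiv ^^ i) (h j))"
  let ?F = "mat l l (\<lambda>(i, j). of_nat (\<Prod>k<i. d j - k) :: 'a)"
  have "coeff (wronskian l h) N = (\<Sum>p\<in>{p. p permutes {0..<l}}. signof p * coeff (\<Prod>i = 0..<l. ?M $$ (i, p i)) N)"
    unfolding wronskian_def det_def'[of ?M l, OF mat_carrier] by (simp add: coeff_sum coeff_of_int_mult)
  also have "\<dots> = (\<Sum>p\<in>{p. p permutes {0..<l}}. signof p * (L * (\<Prod>i = 0..<l. ?F $$ (i, p i))))"
  proof (intro sum.cong refl)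
    fix p assume "p \<in> {p. p permutes {0..<l}}"
    then have p: "p permutes {0..<l}" by simp
    have pi: "p i < l" if "i < l" for i using permutes_in_image[OF p] that by simp
    have "(\<Prod>i = 0..<l. ?M $$ (i, p i)) = (\<Prod>i = 0..<l. (pderiv ^^ i) (h (p i)))"
      by (intro prod.cong refl) (auto simp: pi)
    moreover have "(\<Prod>i = 0..<l. ?F $$ (i, p i)) = (\<Prod>i = 0..<l. of_nat (\<Prod>k<i. d (p i) - k))"
      by (intro prod.cong refl) (auto simp: pi)
    ultimately show "signof p * coeff (\<Prod>i = 0..<l. ?M $$ (i, p i)) N = signof p * (L * (\<Prod>i = 0..<l. ?F $$ (i, p i)))"
      using perm_term_coeff[OF p, of h] unfolding N_def L_def d_def by simp
  qed
  also have "\<dots> = L * det ?F"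
    unfolding det_def'[of ?F l, OF mat_carrier] by (simp add: sum_distrib_left algebra_simps)
  finally have eq: "coeff (wronskian l h) N = L * det ?F" .
  have "L \<noteq> 0" unfolding L_def using assms(2) by (simp add: prod_zero_iff)
  moreover have "inj_on d {0..<l}"
  proof (rule inj_onI)
    fix x y assume "x \<in> {0..<l}" "y \<in> {0..<l}" "d x = d y"
    then show "x = y" using assms(1) unfolding dd_def d_def by force
  qed
  then have "det ?F \<noteq> 0" by (rule falling_det_nonzero)
  ultimately show False using eq W0 by simp
qed

lemma wronskian_nonzero:
  fixes f :: "nat \<Rightarrow> 'a::field_char_0 poly"
  assumes "lin_indep_polys l f"
  shows "wronskian l f \<noteq> 0"
proof -
  have "dd 0 f" unfolding dd_def by simp
  from reduce_all[OF assms _ this] obtain h where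
    h: "lin_indep_polys l h" "wronskian l h = wronskian l f" "dd l h" by auto
  have "wronskian l h \<noteq> 0"
    using wronskian_dd_nonzero[OF h(3)] lin_indep_nonzero[OF h(1)] by blast
  then show ?thesis using h(2) by simp
qed


lemma dvd_pderiv_pow:
  fixes g :: "'a::{idom,semiring_char_0} poly"
  assumes "g ^ n dvd r" shows "g ^ (n - 1) dvd pderiv r"
proof -
  from assms obtain s where r: "r = g ^ n * s" by (auto elim: dvdE)
  have "pderiv r = g ^ n * pderiv s + s * smult (of_nat n) (g ^ (n - 1) * pderiv g)"
    unfolding r pderiv_mult pderiv_power ..
  moreover have d1: "g ^ (n - 1) dvd g ^ n" by (intro le_imp_power_dvd) simp
  moreover have "g ^ (n - 1) dvd g ^ n * pderiv s" using d1 by (rule dvd_mult2)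
  moreover have "g ^ (n - 1) dvd s * smult (of_nat n) (g ^ (n - 1) * pderiv g)"
    by (intro dvd_mult dvd_smult dvd_triv_left)
  ultimately show ?thesis by (simp add: dvd_add)
qed

lemma dvd_funpow_pderiv:
  fixes g :: "'a::{idom,semiring_char_0} poly"
  assumes "g ^ n dvd r" shows "g ^ (n - i) dvd (pderiv ^^ i) r"
proof (induction i)
  case 0 then show ?case using assms by simp
next
  case (Suc i)
  then have "g ^ (n - i - 1) dvd pderiv ((pderiv ^^ i) r)" by (rule dvd_pderiv_pow)
  then show ?case by simp
qed

lemma degree_det_le:
  fixes M :: "'a::idom poly mat"
  assumes "M \<in> carrier_mat l l"
    and "\<And>p. p permutes {0..<l} \<Longrightarrow> degree (\<Prod>i = 0..<l. M $$ (i, p i)) \<le> b"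
  shows "degree (det M) \<le> b"
  unfolding det_def'[OF assms(1)]
proof (rule degree_sum_le)
  fix p assume "p \<in> {p. p permutes {0..<l}}"
  then have "degree (\<Prod>i = 0..<l. M $$ (i, p i)) \<le> b" using assms(2) by simp
  moreover have "degree (signof p * (\<Prod>i = 0..<l. M $$ (i, p i))) \<le> degree (\<Prod>i = 0..<l. M $$ (i, p i))"
    using degree_mult_le[of "signof p" "\<Prod>i = 0..<l. M $$ (i, p i)"] by (simp add: of_int_poly)
  ultimately show "degree (signof p * (\<Prod>i = 0..<l. M $$ (i, p i))) \<le> b" by linarith
qed (simp add: finite_permutations)

lemma dvd_det:
  fixes M :: "'a::idom poly mat"
  assumes "M \<in> carrier_mat l l"
    and "\<And>p. p permutes {0..<l} \<Longrightarrow> c dvd (\<Prod>i = 0..<l. M $$ (i, p i))"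
  shows "c dvd det M"
  unfolding det_def'[OF assms(1)] using assms(2) by (intro dvd_sum dvd_mult) auto

lemma val_dvd:
  fixes W :: "'a::idom poly"
  assumes "W \<noteq> 0" shows "monom 1 1 ^ val W dvd W"
proof -
  have bound: "y \<le> degree W" if "monom 1 1 ^ y dvd W" for y
  proof -
    have "degree (monom (1::'a) 1 ^ y) \<le> degree W" using dvd_imp_degree_le[OF that assms] .
    then show ?thesis by (simp add: degree_power_eq degree_monom_eq)
  qed
  show ?thesis unfolding val_def
    by (rule GreatestI_nat[of _ 0 "degree W"]) (auto intro: bound)
qed


theorem lemma2p5:
  fixes u v :: "'a::field_char_0" and l :: nat
    and \<alpha> \<beta> :: "nat \<Rightarrow> nat" and f :: "nat \<Rightarrow> 'a poly"
  assumes "u * v \<noteq> 0"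
    and "\<And>j. j < l \<Longrightarrow> \<alpha> j \<ge> l \<and> \<beta> j \<ge> l"
    and "\<And>j. j < l \<Longrightarrow> f j = monom 1 (\<alpha> j) * [:v, u:] ^ (\<beta> j)"
    and "lin_indep_polys l f"
  shows "val (wronskian l f) \<le> (\<Sum>j<l. \<alpha> j)"
proof (rule ccontr)
  assume contra: "\<not> ?thesis"
  define W where "W = wronskian l f"
  define g :: "'a poly" where "g = [:v, u:]"
  define X :: "'a poly" where "X = monom 1 1"
  define A where "A = (\<Sum>j\<in>{0..<l}. \<alpha> j)"
  define B where "B = (\<Sum>j\<in>{0..<l}. \<beta> j) - (\<Sum>i\<in>{0..<l}. i)"
  define M where "M = mat l l (\<lambda>(i, j). (pderiv ^^ i) (f j))"
  have u: "u \<noteq> 0" and v: "v \<noteq> 0" using assms(1) by auto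
  have W0: "W \<noteq> 0" unfolding W_def by (rule wronskian_nonzero[OF assms(4)])
  have Mc: "M \<in> carrier_mat l l" unfolding M_def by simp
  have WM: "W = det M" unfolding W_def M_def wronskian_def ..
  have dg: "degree g = 1" unfolding g_def using u by simp
  have degf: "degree (f j) = \<alpha> j + \<beta> j" if "j < l" for j
  proof -
    have g0: "g \<noteq> 0" unfolding g_def using u by simp
    then have gb: "g ^ \<beta> j \<noteq> 0" by simp
    have dgb: "degree (g ^ \<beta> j) = \<beta> j" using degree_power_eq[OF g0, of "\<beta> j"] dg by simp
    have "f j = monom 1 (\<alpha> j) * g ^ \<beta> j" using assms(3)[OF that] unfolding g_def .
    then show ?thesis using gb dgb by (simp add: degree_mult_eq degree_monom_eq)
  qed
  have sum_perm: "(\<Sum>i\<in>{0..<l}. c (p i) - i) = (\<Sum>j\<in>{0..<l}. c j) - (\<Sum>i\<in>{0..<l}. i)"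
    if p: "p permutes {0..<l}" and c: "\<And>j. j < l \<Longrightarrow> c j \<ge> l" for p and c :: "nat \<Rightarrow> nat"
  proof -
    have pi: "p i < l" if "i < l" for i using permutes_in_image[OF p] that by simp
    have "(\<Sum>i\<in>{0..<l}. c (p i) - i) = (\<Sum>i\<in>{0..<l}. c (p i)) - (\<Sum>i\<in>{0..<l}. i)"
    proof (rule sum_subtractf_nat)
      fix i assume "i \<in> {0..<l}"
      then have il: "i < l" by simp
      then have "l \<le> c (p i)" using c pi by blast
      then show "i \<le> c (p i)" using il by simp
    qed
    also have "(\<Sum>i\<in>{0..<l}. c (p i)) = (\<Sum>j\<in>{0..<l}. c j)"
      using sum.reindex_bij_betw[OF permutes_imp_bij[OF p], of c] .
    finally show ?thesis .
  qed
  have cb: "l \<le> \<beta> j" if "j < l" for j using assms(2)[OF that] by simp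
  have cab: "l \<le> \<alpha> j + \<beta> j" if "j < l" for j using assms(2)[OF that] by simp
  have degW: "degree W \<le> A + B"
  proof -
    have "degree W \<le> (\<Sum>j\<in>{0..<l}. \<alpha> j + \<beta> j) - (\<Sum>i\<in>{0..<l}. i)"
      unfolding WM
    proof (rule degree_det_le[OF Mc])
      fix p assume p: "p permutes {0..<l}"
      have pi: "p i < l" if "i < l" for i using permutes_in_image[OF p] that by simp
      have "degree (\<Prod>i = 0..<l. M $$ (i, p i)) \<le> (\<Sum>i\<in>{0..<l}. degree (M $$ (i, p i)))"
        using degree_prod_sum_le[of "{0..<l}" "\<lambda>i. M $$ (i, p i)"] by (simp add: comp_def)
      also have "\<dots> \<le> (\<Sum>i\<in>{0..<l}. (\<alpha> (p i) + \<beta> (p i)) - i)"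
      proof (intro sum_mono)
        fix i assume "i \<in> {0..<l}"
        then have i: "i < l" "p i < l" using pi by auto
        have "degree (M $$ (i, p i)) = degree ((pderiv ^^ i) (f (p i)))" unfolding M_def using i by simp
        also have "\<dots> \<le> degree (f (p i)) - i" by (rule degree_funpow_pderiv)
        finally show "degree (M $$ (i, p i)) \<le> \<alpha> (p i) + \<beta> (p i) - i" using degf[OF i(2)] by simp
      qed
      also have "\<dots> = (\<Sum>j\<in>{0..<l}. \<alpha> j + \<beta> j) - (\<Sum>i\<in>{0..<l}. i)"
        using sum_perm[OF p, of "\<lambda>j. \<alpha> j + \<beta> j", OF cab] by simp
      finally show "degree (\<Prod>i = 0..<l. M $$ (i, p i)) \<le> (\<Sum>j\<in>{0..<l}. \<alpha> j + \<beta> j) - (\<Sum>i\<in>{0..<l}. i)" .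
    qed
    moreover have "(\<Sum>i\<in>{0..<l}. i) \<le> (\<Sum>j\<in>{0..<l}. \<beta> j)"
      using assms(2) by (intro sum_mono) (auto intro: order.trans[OF less_imp_le])
    ultimately show ?thesis unfolding A_def B_def sum.distrib by linarith
  qed
  have gW: "g ^ B dvd W" unfolding WM
  proof (rule dvd_det[OF Mc])
    fix p assume p: "p permutes {0..<l}"
    have pi: "p i < l" if "i < l" for i using permutes_in_image[OF p] that by simp
    have "(\<Prod>i = 0..<l. g ^ (\<beta> (p i) - i)) dvd (\<Prod>i = 0..<l. M $$ (i, p i))"
    proof (rule prod_dvd_prod)
      fix i assume "i \<in> {0..<l}"
      then have i: "i < l" "p i < l" using pi by auto
      have "g ^ \<beta> (p i) dvd f (p i)" using assms(3)[OF i(2)] unfolding g_def by simp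
      then have "g ^ (\<beta> (p i) - i) dvd (pderiv ^^ i) (f (p i))" by (rule dvd_funpow_pderiv)
      then show "g ^ (\<beta> (p i) - i) dvd M $$ (i, p i)" unfolding M_def using i by simp
    qed
    moreover have "(\<Prod>i = 0..<l. g ^ (\<beta> (p i) - i)) = g ^ B"
      unfolding power_sum[symmetric] B_def using sum_perm[OF p, of \<beta>, OF cb] by simp
    ultimately show "g ^ B dvd (\<Prod>i = 0..<l. M $$ (i, p i))" by simp
  qed
  have "A < val W" using contra unfolding A_def W_def by (simp add: atLeast0LessThan)
  then have "X ^ Suc A dvd X ^ val W" by (intro le_imp_power_dvd) simp
  then have "X ^ Suc A dvd W" using val_dvd[OF W0] unfolding X_def by (rule dvd_trans)
  then obtain Q where Q: "W = X ^ Suc A * Q" by (auto elim: dvdE)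
  have Q0: "Q \<noteq> 0" using W0 Q by auto
  define r where "r = - v / u"
  define h1 :: "'a poly" where "h1 = [:- r, 1:]"
  have r0: "r \<noteq> 0" unfolding r_def using u v by simp
  have gh: "g ^ B = [:u ^ B:] * h1 ^ B"
  proof -
    have "g = [:u:] * h1" unfolding g_def h1_def r_def using u by simp
    then show ?thesis by (simp add: smult_power)
  qed
  have "h1 ^ B dvd W" using gW unfolding gh by (rule dvd_mult_right)
  then have "B \<le> order r W" using W0 unfolding h1_def order_divides by simp
  moreover have "order r W = order r (X ^ Suc A) + order r Q" unfolding Q
    by (rule order_mult) (use W0 Q in simp)
  moreover have "order r (X ^ Suc A) = 0"
    by (rule order_0I) (simp add: X_def r0 poly_monom)
  ultimately have "B \<le> order r Q" by simp
  then have "h1 ^ B dvd Q" unfolding h1_def order_divides by simp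
  then have "degree (h1 ^ B) \<le> degree Q" using Q0 by (rule dvd_imp_degree_le)
  then have "B \<le> degree Q" unfolding h1_def by (simp add: degree_power_eq)
  moreover have "degree W = Suc A + degree Q" unfolding Q X_def using Q0
    by (simp add: degree_mult_eq degree_power_eq degree_monom_eq)
  ultimately show False using degW by linarith
qed


end
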